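(* Let $F:\mathcal P(\mathbb R^d)\to\mathbb R$ be in $\mathcal C^1$ and assume its second order linear functional derivative $\frac{\delta^2F}{\delta m^2}:\mathcal P(\mathbb R^d)\times\mathbb R^d\times\mathbb R^d\to\mathbb R$ exists and is jointly continuous, and that there is $L>0$ such that for any random variables $\eta_1,\eta_2$ with $\mathbb E|\eta_i|^2<\infty$, $i=1,2$, $$\mathbb E\Big[\sup_{\nu\in\mathcal P_2(\mathbb R^d)}\Big|\frac{\delta F}{\delta m}(\nu,\eta_1)\Big|\Big]+\mathbb E\Big[\sup_{\nu\in\mathcal P_2(\mathbb R^d)}\Big|\frac{\delta^2F}{\delta m^2}(\nu,\eta_1,\eta_2)\Big|\Big]\le L.$$ If there is $m^*\in\mathcal P_2(\mathbb R^d)$ with $F(m^* )=\inf_{m\in\mathcal P_2(\mathbb R^d)}F(m)$, then for every $N\in\mathbb N$ $$\Big|\inf_{(x_i)_{i=1}^N\subset\mathbb R^d}F\Big(\frac1N\sum_{i=1}^N\delta_{x_i}\Big)-F(m^* )\Big|\le\frac{2L}{N}.$$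
   Context: $\mathcal P(\mathbb R^d)$ is the set of Borel probability measures on $\mathbb R^d$, $\mathcal P_2(\mathbb R^d)$ those with finite second moment. A function $F:\mathcal P(\mathbb R^d)\to\mathbb R$ is in $\mathcal C^1$ if there is a bounded continuous function $\frac{\delta F}{\delta m}:\mathcal P(\mathbb R^d)\times\mathbb R^d\to\mathbb R$ (the linear functional derivative, normalised by $\int\frac{\delta F}{\delta m}(m,x)m(dx)=0$) such that for all $m,m'$: $F(m')-F(m)=\int_0^1\int_{\mathbb R^d}\frac{\delta F}{\delta m}((1-\lambda)m+\lambda m',x)(m'-m)(dx)\,d\lambda$. The second order linear functional derivative $\frac{\delta^2F}{\delta m^2}(m,x,y)$ is the linear functional derivative (in the same sense, in the variable $y$) of the map $m\mapsto\frac{\delta F}{\delta m}(m,x)$ for fixed $x$. *)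

theory Defs
  imports "HOL-Probability.Probability"
begin

definition Pm :: "'a::euclidean_space measure set" where
  "Pm = {m. prob_space m \<and> sets m = sets borel}"

definition P2 :: "'a::euclidean_space measure set" where
  "P2 = {m \<in> Pm. integrable m (\<lambda>x. norm x ^ 2)}"

definition mix :: "real \<Rightarrow> 'a::euclidean_space measure \<Rightarrow> 'a measure \<Rightarrow> 'a measure" where
  "mix l m m' = measure_of UNIV (sets borel)
     (\<lambda>A. ennreal (1 - l) * emeasure m A + ennreal l * emeasure m' A)"

definition empirical :: "nat \<Rightarrow> (nat \<Rightarrow> 'a::euclidean_space) \<Rightarrow> 'a measure" where
  "empirical N x = measure_of UNIV (sets borel)
     (\<lambda>A. ennreal ((\<Sum>i<N. indicator A (x i)) / real N))"

definition weak_conv_seq :: "(nat \<Rightarrow> 'a::euclidean_space measure) \<Rightarrow> 'a measure \<Rightarrow> bool" where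
  "weak_conv_seq ms m \<longleftrightarrow>
     (\<forall>f :: 'a \<Rightarrow> real. continuous_on UNIV f \<and> bounded (range f) \<longrightarrow>
        (\<lambda>n. \<integral>x. f x \<partial>ms n) \<longlonglongrightarrow> (\<integral>x. f x \<partial>m))"

text \<open>Joint continuity on P(R^d) x R^d (weak topology, which is metrizable, so sequential).\<close>
definition jcont :: "('a::euclidean_space measure \<Rightarrow> 'a \<Rightarrow> real) \<Rightarrow> bool" where
  "jcont D \<longleftrightarrow> (\<forall>ms m xs x. (\<forall>n. ms n \<in> Pm) \<and> m \<in> Pm \<and> weak_conv_seq ms m \<and> xs \<longlonglongrightarrow> x
      \<longrightarrow> (\<lambda>n. D (ms n) (xs n)) \<longlonglongrightarrow> D m x)"

definition jcont2 :: "('a::euclidean_space measure \<Rightarrow> 'a \<Rightarrow> 'a \<Rightarrow> real) \<Rightarrow> bool" where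
  "jcont2 D \<longleftrightarrow> (\<forall>ms m xs x ys y. (\<forall>n. ms n \<in> Pm) \<and> m \<in> Pm \<and> weak_conv_seq ms m
      \<and> xs \<longlonglongrightarrow> x \<and> ys \<longlonglongrightarrow> y
      \<longrightarrow> (\<lambda>n. D (ms n) (xs n) (ys n)) \<longlonglongrightarrow> D m x y)"

text \<open>D is the (normalised) linear functional derivative of F.\<close>
definition is_lfd :: "('a::euclidean_space measure \<Rightarrow> real) \<Rightarrow> ('a measure \<Rightarrow> 'a \<Rightarrow> real) \<Rightarrow> bool" where
  "is_lfd F D \<longleftrightarrow>
     (\<exists>C. \<forall>m\<in>Pm. \<forall>x. \<bar>D m x\<bar> \<le> C) \<and> jcont D \<and>
     (\<forall>m\<in>Pm. (\<integral>x. D m x \<partial>m) = 0) \<and>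
     (\<forall>m\<in>Pm. \<forall>m'\<in>Pm.
        ((\<lambda>l. (\<integral>x. D (mix l m m') x \<partial>m') - (\<integral>x. D (mix l m m') x \<partial>m))
          has_integral (F m' - F m)) {0..1})"

definition C1 :: "('a::euclidean_space measure \<Rightarrow> real) \<Rightarrow> bool" where
  "C1 F \<longleftrightarrow> (\<exists>D. is_lfd F D)"

end

theory Submission
  imports Defs
begin


lemma meas_b: "sets M = sets borel \<Longrightarrow> f \<in> borel \<rightarrow>\<^sub>M N \<Longrightarrow> f \<in> M \<rightarrow>\<^sub>M N"
  using measurable_cong_sets[of M borel N N] by auto

lemma comb_nn:
  fixes M :: "'a::euclidean_space measure" and Mj :: "'i \<Rightarrow> 'a measure"
  assumes J: "finite J" and sM: "sets M = sets borel"
    and sMj: "\<And>j. j \<in> J \<Longrightarrow> sets (Mj j) = sets borel"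
    and em: "\<And>A. A \<in> sets borel \<Longrightarrow> emeasure M A = (\<Sum>j\<in>J. ennreal (c j) * emeasure (Mj j) A)"
    and f: "f \<in> borel_measurable borel"
  shows "(\<integral>\<^sup>+x. f x \<partial>M) = (\<Sum>j\<in>J. ennreal (c j) * (\<integral>\<^sup>+x. f x \<partial>Mj j))"
  using f
proof (induct rule: borel_measurable_induct)
  case (cong f g)
  then have "f = g" by auto
  then show ?case using cong by simp
next
  case (set A)
  have "(\<integral>\<^sup>+x. indicator A x \<partial>M) = emeasure M A"
    using set sM by (intro nn_integral_indicator) auto
  moreover have "\<And>j. j \<in> J \<Longrightarrow> (\<integral>\<^sup>+x. indicator A x \<partial>Mj j) = emeasure (Mj j) A"
    using set sMj by (intro nn_integral_indicator) auto
  ultimately show ?case using em[OF set] by (simp cong: sum.cong)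
next
  case (mult u c')
  have mM: "u \<in> borel_measurable M" using mult meas_b[OF sM] by auto
  have mMj: "\<And>j. j \<in> J \<Longrightarrow> u \<in> borel_measurable (Mj j)"
    using mult meas_b[OF sMj] by auto
  have "(\<integral>\<^sup>+x. c' * u x \<partial>M) = c' * (\<integral>\<^sup>+x. u x \<partial>M)" using mM by (rule nn_integral_cmult)
  also have "\<dots> = (\<Sum>j\<in>J. ennreal (c j) * (c' * (\<integral>\<^sup>+x. u x \<partial>Mj j)))"
    using mult by (simp add: sum_distrib_left mult.left_commute)
  also have "\<dots> = (\<Sum>j\<in>J. ennreal (c j) * (\<integral>\<^sup>+x. c' * u x \<partial>Mj j))"
    using mMj by (intro sum.cong refl) (simp add: nn_integral_cmult)
  finally show ?case .
next
  case (add u v)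
  have mM: "u \<in> borel_measurable M" "v \<in> borel_measurable M"
    using add meas_b[OF sM] by auto
  have mMj: "\<And>j. j \<in> J \<Longrightarrow> u \<in> borel_measurable (Mj j) \<and> v \<in> borel_measurable (Mj j)"
    using add meas_b[OF sMj] by auto
  have "(\<integral>\<^sup>+x. v x + u x \<partial>M) = (\<integral>\<^sup>+x. v x \<partial>M) + (\<integral>\<^sup>+x. u x \<partial>M)"
    using mM by (intro nn_integral_add) auto
  also have "\<dots> = (\<Sum>j\<in>J. ennreal (c j) * ((\<integral>\<^sup>+x. v x \<partial>Mj j) + (\<integral>\<^sup>+x. u x \<partial>Mj j)))"
    using add by (simp add: sum.distrib distrib_left)
  also have "\<dots> = (\<Sum>j\<in>J. ennreal (c j) * (\<integral>\<^sup>+x. v x + u x \<partial>Mj j))"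
    using mMj by (intro sum.cong refl) (simp add: nn_integral_add)
  finally show ?case .
next
  case (seq U)
  have mM: "\<And>i. U i \<in> borel_measurable M"
    by (intro meas_b[OF sM] seq(1))
  have mMj: "\<And>i j. j \<in> J \<Longrightarrow> U i \<in> borel_measurable (Mj j)"
    by (intro meas_b[OF sMj] seq(1))
  have "(\<integral>\<^sup>+x. (SUP i. U i) x \<partial>M) = (\<integral>\<^sup>+x. (SUP i. U i x) \<partial>M)" by (simp add: image_comp)
  also have "\<dots> = (SUP i. (\<integral>\<^sup>+x. U i x \<partial>M))"
    using seq mM by (intro nn_integral_monotone_convergence_SUP) auto
  also have "\<dots> = (SUP i. (\<Sum>j\<in>J. ennreal (c j) * (\<integral>\<^sup>+x. U i x \<partial>Mj j)))"
    using seq by simp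
  also have "\<dots> = (\<Sum>j\<in>J. (SUP i. ennreal (c j) * (\<integral>\<^sup>+x. U i x \<partial>Mj j)))"
  proof (rule ennreal_SUP_sum)
    fix j assume "j \<in> J"
    show "incseq (\<lambda>i. ennreal (c j) * (\<integral>\<^sup>+x. U i x \<partial>Mj j))"
      using seq(4) unfolding incseq_def le_fun_def
      by (auto intro!: mult_left_mono nn_integral_mono)
  qed
  also have "\<dots> = (\<Sum>j\<in>J. ennreal (c j) * (SUP i. (\<integral>\<^sup>+x. U i x \<partial>Mj j)))"
    by (simp add: SUP_mult_left_ennreal)
  also have "\<dots> = (\<Sum>j\<in>J. ennreal (c j) * (\<integral>\<^sup>+x. (SUP i. U i) x \<partial>Mj j))"
    using seq mMj by (intro sum.cong refl arg_cong2[where f="(*)"]) (auto simp: nn_integral_monotone_convergence_SUP image_comp)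
  finally show ?case .
qed

lemma comb_int:
  fixes M :: "'a::euclidean_space measure" and Mj :: "'i \<Rightarrow> 'a measure" and f :: "'a \<Rightarrow> real"
  assumes J: "finite J" and sM: "sets M = sets borel"
    and sMj: "\<And>j. j \<in> J \<Longrightarrow> sets (Mj j) = sets borel"
    and c: "\<And>j. j \<in> J \<Longrightarrow> c j \<ge> 0"
    and em: "\<And>A. A \<in> sets borel \<Longrightarrow> emeasure M A = (\<Sum>j\<in>J. ennreal (c j) * emeasure (Mj j) A)"
    and f: "f \<in> borel_measurable borel"
    and fi: "\<And>j. j \<in> J \<Longrightarrow> integrable (Mj j) f"
  shows "integrable M f \<and> integral\<^sup>L M f = (\<Sum>j\<in>J. c j * integral\<^sup>L (Mj j) f)"
proof -
  have mp: "(\<lambda>x. ennreal (f x)) \<in> borel_measurable borel" "(\<lambda>x. ennreal (- f x)) \<in> borel_measurable borel"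
    using f by auto
  have P: "(\<integral>\<^sup>+x. ennreal (f x) \<partial>M) = (\<Sum>j\<in>J. ennreal (c j) * (\<integral>\<^sup>+x. ennreal (f x) \<partial>Mj j))"
    by (rule comb_nn[OF J sM sMj em mp(1)]) auto
  have Q: "(\<integral>\<^sup>+x. ennreal (- f x) \<partial>M) = (\<Sum>j\<in>J. ennreal (c j) * (\<integral>\<^sup>+x. ennreal (- f x) \<partial>Mj j))"
    by (rule comb_nn[OF J sM sMj em mp(2)]) auto
  have fin: "\<And>j. j \<in> J \<Longrightarrow> (\<integral>\<^sup>+x. ennreal (f x) \<partial>Mj j) < top \<and> (\<integral>\<^sup>+x. ennreal (- f x) \<partial>Mj j) < top"
    using fi unfolding real_integrable_def by (auto simp: top.not_eq_extremum)
  have fin1: "\<And>j. j \<in> J \<Longrightarrow> ennreal (c j) * (\<integral>\<^sup>+x. ennreal (f x) \<partial>Mj j) < top"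
    using fin by (simp add: ennreal_mult_less_top)
  have fin2: "\<And>j. j \<in> J \<Longrightarrow> ennreal (c j) * (\<integral>\<^sup>+x. ennreal (- f x) \<partial>Mj j) < top"
    using fin by (simp add: ennreal_mult_less_top)
  have PQ: "(\<integral>\<^sup>+x. ennreal (f x) \<partial>M) < top" "(\<integral>\<^sup>+x. ennreal (- f x) \<partial>M) < top"
    unfolding P Q using fin1 fin2 J by (auto simp: ennreal_sum_less_top)
  have iM: "integrable M f"
    unfolding real_integrable_def using PQ meas_b[OF sM f] by auto
  have "integral\<^sup>L M f = enn2real (\<integral>\<^sup>+x. ennreal (f x) \<partial>M) - enn2real (\<integral>\<^sup>+x. ennreal (- f x) \<partial>M)"
    by (rule real_lebesgue_integral_def[OF iM])
  also have "\<dots> = (\<Sum>j\<in>J. c j * enn2real (\<integral>\<^sup>+x. ennreal (f x) \<partial>Mj j)) - (\<Sum>j\<in>J. c j * enn2real (\<integral>\<^sup>+x. ennreal (- f x) \<partial>Mj j))"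
    unfolding P Q using fin1 fin2 c by (simp add: enn2real_sum enn2real_mult)
  also have "\<dots> = (\<Sum>j\<in>J. c j * integral\<^sup>L (Mj j) f)"
    by (simp add: sum_subtractf[symmetric] right_diff_distrib real_lebesgue_integral_def[OF fi] cong: sum.cong)
  finally show ?thesis using iM by simp
qed





definition combm :: "'i set \<Rightarrow> ('i \<Rightarrow> real) \<Rightarrow> ('i \<Rightarrow> 'a::euclidean_space measure) \<Rightarrow> 'a measure" where
 "combm J c Mj = measure_of UNIV (sets borel) (\<lambda>A. \<Sum>j\<in>J. ennreal (c j) * emeasure (Mj j) A)"

lemma sets_combm[simp]: "sets (combm J c Mj) = sets borel"
  unfolding combm_def by (simp add: sets_measure_of) (metis sets.sigma_sets_eq space_borel)

lemma space_combm[simp]: "space (combm J c Mj) = UNIV"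
  unfolding combm_def by (simp add: space_measure_of_conv)
lemma emeasure_combm:
  fixes Mj :: "'i \<Rightarrow> 'a::euclidean_space measure"
  assumes sMj: "\<And>j. j \<in> J \<Longrightarrow> sets (Mj j) = sets borel" and A: "A \<in> sets borel"
  shows "emeasure (combm J c Mj) A = (\<Sum>j\<in>J. ennreal (c j) * emeasure (Mj j) A)"
  unfolding combm_def
proof (rule emeasure_measure_of_sigma[OF _ _ _ A])
  show "sigma_algebra UNIV (sets borel)"
    using sets.sigma_algebra_axioms[of borel] by simp
  show "positive (sets borel) (\<lambda>A. \<Sum>j\<in>J. ennreal (c j) * emeasure (Mj j) A)"
    by (simp add: positive_def)
  show "countably_additive (sets borel) (\<lambda>A. \<Sum>j\<in>J. ennreal (c j) * emeasure (Mj j) A)"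
  proof (rule countably_additiveI)
    fix B :: "nat \<Rightarrow> 'a set" assume B: "range B \<subseteq> sets borel" "disjoint_family B"
    have "(\<Sum>i. \<Sum>j\<in>J. ennreal (c j) * emeasure (Mj j) (B i))
        = (\<Sum>j\<in>J. \<Sum>i. ennreal (c j) * emeasure (Mj j) (B i))"
      by (rule suminf_sum) auto
    also have "\<dots> = (\<Sum>j\<in>J. ennreal (c j) * emeasure (Mj j) (\<Union>i. B i))"
      using B sMj by (intro sum.cong refl) (simp add: suminf_emeasure)
    finally show "(\<Sum>i. \<Sum>j\<in>J. ennreal (c j) * emeasure (Mj j) (B i))
        = (\<Sum>j\<in>J. ennreal (c j) * emeasure (Mj j) (\<Union>i. B i))" .
  qed
qed


lemma integral_combm:
  fixes f :: "'a::euclidean_space \<Rightarrow> real" and Mj :: "'i \<Rightarrow> 'a measure"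
  assumes J: "finite J" and sMj: "\<And>j. j \<in> J \<Longrightarrow> sets (Mj j) = sets borel"
    and c: "\<And>j. j \<in> J \<Longrightarrow> c j \<ge> 0"
    and f: "f \<in> borel_measurable borel"
    and fi: "\<And>j. j \<in> J \<Longrightarrow> integrable (Mj j) f"
  shows "integrable (combm J c Mj) f \<and> integral\<^sup>L (combm J c Mj) f = (\<Sum>j\<in>J. c j * integral\<^sup>L (Mj j) f)"
  by (rule comb_int[OF J sets_combm sMj c emeasure_combm[OF sMj] f fi])


lemma return_P2: "return borel (x::'a::euclidean_space) \<in> P2"
proof -
  interpret prob_space "return borel x" by (rule prob_space_return) simp
  have mp: "Measurable.pred borel (\<lambda>y::'a. norm (norm y ^ 2) \<le> norm x ^ 2)" by measurable
  have "integrable (return borel x) (\<lambda>y. norm y ^ 2)"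
  proof (rule integrable_const_bound[where B="norm x ^ 2"])
    show "AE y in return borel x. norm (norm y ^ 2) \<le> norm x ^ 2"
      using AE_return[OF _ mp] by simp
  qed simp
  moreover have "sets (return borel x) = sets borel" by simp
  ultimately show ?thesis unfolding P2_def Pm_def using prob_space_axioms by blast
qed
lemma combm_P2:
  fixes Mj :: "'i \<Rightarrow> 'a::euclidean_space measure"
  assumes J: "finite J" and P: "\<And>j. j \<in> J \<Longrightarrow> Mj j \<in> P2"
    and c: "\<And>j. j \<in> J \<Longrightarrow> c j \<ge> 0" and s: "sum c J = 1"
  shows "combm J c Mj \<in> P2"
proof -
  have sMj: "\<And>j. j \<in> J \<Longrightarrow> sets (Mj j) = sets borel" and pj: "\<And>j. j \<in> J \<Longrightarrow> prob_space (Mj j)"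
    and ij: "\<And>j. j \<in> J \<Longrightarrow> integrable (Mj j) (\<lambda>x. norm x ^ 2)"
    using P unfolding P2_def Pm_def by blast+
  have "emeasure (combm J c Mj) UNIV = (\<Sum>j\<in>J. ennreal (c j) * emeasure (Mj j) UNIV)"
    by (rule emeasure_combm[OF sMj]) simp_all
  also have "\<dots> = (\<Sum>j\<in>J. ennreal (c j))"
  proof (intro sum.cong refl)
    fix j assume j: "j \<in> J"
    have "space (Mj j) = UNIV" using sets_eq_imp_space_eq[OF sMj[OF j]] by simp
    then show "ennreal (c j) * emeasure (Mj j) UNIV = ennreal (c j)"
      using prob_space.emeasure_space_1[OF pj[OF j]] by simp
  qed
  also have "\<dots> = ennreal (sum c J)" by (rule sum_ennreal) (rule c)
  also have "\<dots> = 1" using s by simp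
  finally have e1: "emeasure (combm J c Mj) (space (combm J c Mj)) = 1" by simp
  have ps: "prob_space (combm J c Mj)" by (rule prob_spaceI[OF e1])
  have mb: "(\<lambda>x::'a. norm x ^ 2) \<in> borel_measurable borel" by measurable
  have "integrable (combm J c Mj) (\<lambda>x. norm x ^ 2)"
    using integral_combm[where Mj=Mj and c=c and J=J and f="\<lambda>x. norm x ^ 2", OF J sMj c mb ij] by blast
  moreover have "sets (combm J c Mj) = sets borel" by simp
  ultimately show ?thesis using ps unfolding P2_def Pm_def by blast
qed



lemma P2_Pm: "m \<in> P2 \<Longrightarrow> m \<in> Pm" unfolding P2_def by blast
lemma Pm_sets: "m \<in> Pm \<Longrightarrow> sets m = sets borel" unfolding Pm_def by blast
lemma Pm_prob: "m \<in> Pm \<Longrightarrow> prob_space m" unfolding Pm_def by blast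
lemma Pm_space: "m \<in> Pm \<Longrightarrow> space m = UNIV"
  using sets_eq_imp_space_eq[OF Pm_sets] by simp

lemma mix_eq:
  "mix l m m' = combm {0::nat,1} (\<lambda>j. if j=0 then 1-l else l) (\<lambda>j. if j=0 then m else m')"
  unfolding mix_def combm_def by (intro measure_of_eq) simp_all

lemma empirical_eq:
  "empirical N x = combm {..<N} (\<lambda>_. 1 / real N) (\<lambda>i. return borel (x i))"
  unfolding empirical_def combm_def
proof (intro measure_of_eq)
  fix a assume "a \<in> sigma_sets UNIV (sets (borel::'a measure))"
  then have a: "a \<in> sets borel" by (metis sets.sigma_sets_eq space_borel)
  have "(\<Sum>j<N. ennreal (1 / real N) * emeasure (return borel (x j)) a)
      = (\<Sum>j<N. ennreal (1 / real N * indicator a (x j)))"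
  proof (intro sum.cong refl)
    fix j
    show "ennreal (1 / real N) * emeasure (return borel (x j)) a = ennreal (1 / real N * indicator a (x j))"
      using a by (cases "x j \<in> a") simp_all
  qed
  also have "\<dots> = ennreal (\<Sum>j<N. 1 / real N * indicator a (x j))"
    by (rule sum_ennreal) simp
  also have "(\<Sum>j<N. 1 / real N * indicator a (x j)) = (\<Sum>i<N. indicator a (x i)) / real N"
    by (simp add: sum_divide_distrib)
  finally show "ennreal ((\<Sum>i<N. indicator a (x i)) / real N) =
     (\<Sum>j<N. ennreal (1 / real N) * emeasure (return borel (x j)) a)" by simp
qed simp

lemma mix_P2:
  assumes "m \<in> P2" "m' \<in> P2" "0 \<le> l" "l \<le> 1"
  shows "mix l m m' \<in> P2"
  unfolding mix_eq using assms by (intro combm_P2) auto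

lemma integral_mix:
  fixes f :: "'a::euclidean_space \<Rightarrow> real"
  assumes m: "m \<in> Pm" "m' \<in> Pm" and l: "0 \<le> l" "l \<le> 1"
    and f: "f \<in> borel_measurable borel" and fi: "integrable m f" "integrable m' f"
  shows "integral\<^sup>L (mix l m m') f = (1 - l) * integral\<^sup>L m f + l * integral\<^sup>L m' f"
proof -
  have "integrable (mix l m m') f \<and> integral\<^sup>L (mix l m m') f =
    (\<Sum>j\<in>{0::nat,1}. (\<lambda>j. if j=0 then 1-l else l) j * integral\<^sup>L ((\<lambda>j. if j=0 then m else m') j) f)"
    unfolding mix_eq using m l fi by (intro integral_combm f) (auto simp: Pm_sets)
  then show ?thesis by simp
qed


lemma integrable_return_b:
  fixes f :: "'a::euclidean_space \<Rightarrow> real"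
  assumes f: "f \<in> borel_measurable borel"
  shows "integrable (return borel y) f"
proof -
  interpret prob_space "return borel y" by (rule prob_space_return) simp
  have mp: "Measurable.pred borel (\<lambda>z. norm (f z) \<le> norm (f y))" using f by measurable
  show ?thesis
  proof (rule integrable_const_bound[where B="norm (f y)"])
    show "AE z in return borel y. norm (f z) \<le> norm (f y)"
      using AE_return[OF _ mp] by simp
  qed (simp add: f)
qed

definition rho :: "nat \<Rightarrow> 'a measure \<Rightarrow> nat \<Rightarrow> (nat \<Rightarrow> 'a) \<Rightarrow> 'a::euclidean_space measure" where
"rho N ms k x = combm {..k} (\<lambda>j. if j < k then 1 / real N else (real N - real k) / real N)
   (\<lambda>j. if j < k then return borel (x j) else ms)"

lemma atMost_insert: "{..k::nat} = insert k {..<k}" by auto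

lemma rho_P2:
  assumes ms: "ms \<in> P2" and k: "k \<le> N" and N: "N \<ge> 1"
  shows "rho N ms k x \<in> P2"
  unfolding rho_def
proof (rule combm_P2)
  show "sum (\<lambda>j. if j < k then 1 / real N else (real N - real k) / real N) {..k} = 1"
    unfolding atMost_insert using N by (simp add: field_simps)
qed (use ms return_P2 k in auto)

lemma rho_upd: "rho N ms k (x(k:=z)) = rho N ms k x"
proof -
  have "(\<lambda>j. if j < k then return borel ((x(k:=z)) j) else ms) = (\<lambda>j. if j < k then return borel (x j) else ms)"
    by (auto simp: fun_eq_iff)
  then show ?thesis unfolding rho_def by simp
qed

lemma rho_0:
  assumes ms: "ms \<in> Pm" and N: "N \<ge> 1"
  shows "rho N ms 0 x = ms"
proof (rule measure_eqI)
  show "sets (rho N ms 0 x) = sets ms" using Pm_sets[OF ms] by (simp add: rho_def)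
  fix A assume "A \<in> sets (rho N ms 0 x)"
  then have A: "A \<in> sets borel" by (simp add: rho_def)
  show "emeasure (rho N ms 0 x) A = emeasure ms A"
    unfolding rho_def using A N Pm_sets[OF ms] by (subst emeasure_combm) auto
qed

lemma rho_N:
  assumes ms: "ms \<in> Pm" and N: "N \<ge> 1"
  shows "rho N ms N x = empirical N x"
proof (rule measure_eqI)
  show "sets (rho N ms N x) = sets (empirical N x)" by (simp add: rho_def empirical_eq)
  fix A assume "A \<in> sets (rho N ms N x)"
  then have A: "A \<in> sets borel" by (simp add: rho_def)
  have "emeasure (rho N ms N x) A = (\<Sum>j\<in>{..N}. ennreal (if j < N then 1 / real N else (real N - real N) / real N) *
      emeasure (if j < N then return borel (x j) else ms) A)"
    unfolding rho_def using A Pm_sets[OF ms] by (subst emeasure_combm) auto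
  also have "\<dots> = (\<Sum>j<N. ennreal (1 / real N) * emeasure (return borel (x j)) A)"
    unfolding atMost_insert by simp
  also have "\<dots> = emeasure (empirical N x) A"
    unfolding empirical_eq using A by (subst emeasure_combm) auto
  finally show "emeasure (rho N ms N x) A = emeasure (empirical N x) A" .
qed

lemma integral_rho:
  fixes f :: "'a::euclidean_space \<Rightarrow> real"
  assumes ms: "ms \<in> Pm" and k: "k \<le> N" and f: "f \<in> borel_measurable borel" and fi: "integrable ms f"
  shows "integral\<^sup>L (rho N ms k x) f = (\<Sum>j<k. f (x j)) / real N + (real N - real k) / real N * integral\<^sup>L ms f"
proof -
  have "integrable (rho N ms k x) f \<and> integral\<^sup>L (rho N ms k x) f =
     (\<Sum>j\<in>{..k}. (if j < k then 1 / real N else (real N - real k) / real N) * integral\<^sup>L (if j < k then return borel (x j) else ms) f)"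
    unfolding rho_def
    by (rule integral_combm) (use ms k f fi integrable_return_b[OF f] in \<open>auto simp: Pm_sets\<close>)
  also have "(\<Sum>j\<in>{..k}. (if j < k then 1 / real N else (real N - real k) / real N) * integral\<^sup>L (if j < k then return borel (x j) else ms) f)
     = (\<Sum>j<k. f (x j) / real N) + (real N - real k) / real N * integral\<^sup>L ms f"
    unfolding atMost_insert using f by (simp add: integral_return)
  finally show ?thesis by (simp add: sum_divide_distrib)
qed



lemma weak_conv_const: "weak_conv_seq (\<lambda>n. m) m"
  unfolding weak_conv_seq_def by simp

lemma lfd_cont:
  assumes D: "is_lfd G D" and m: "m \<in> Pm"
  shows "continuous_on UNIV (D m)"
proof (rule continuous_on_sequentiallyI)
  fix u :: "nat \<Rightarrow> 'a" and a assume "u \<longlonglongrightarrow> a"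
  have J: "jcont D" using D unfolding is_lfd_def by blast
  have H: "\<forall>xs x. (\<forall>n. (\<lambda>n. m) n \<in> Pm) \<and> m \<in> Pm \<and> weak_conv_seq (\<lambda>n. m) m \<and> xs \<longlonglongrightarrow> x
      \<longrightarrow> (\<lambda>n. D ((\<lambda>n. m) n) (xs n)) \<longlonglongrightarrow> D m x"
    using J[unfolded jcont_def, THEN spec[where x="\<lambda>n. m"], THEN spec[where x=m]] by simp
  then show "(\<lambda>n. D m (u n)) \<longlonglongrightarrow> D m a"
    using m weak_conv_const[of m] \<open>u \<longlonglongrightarrow> a\<close> by simp
qed

lemma lfd_meas:
  assumes D: "is_lfd G D" and m: "m \<in> Pm"
  shows "D m \<in> borel_measurable borel"
  by (rule borel_measurable_continuous_onI[OF lfd_cont[OF D m]])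

lemma int_bdd:
  fixes f :: "'a::euclidean_space \<Rightarrow> real"
  assumes m: "m \<in> Pm" and f: "f \<in> borel_measurable borel" and C: "\<And>x. \<bar>f x\<bar> \<le> C"
  shows "integrable m f"
proof -
  interpret prob_space m by (rule Pm_prob[OF m])
  show ?thesis
    by (rule integrable_const_bound[where B=C]) (use C meas_b[OF Pm_sets[OF m] f] in auto)
qed

lemma int_abs_le:
  fixes f :: "'a::euclidean_space \<Rightarrow> real"
  assumes m: "m \<in> Pm" and f: "f \<in> borel_measurable borel" and C: "\<And>x. \<bar>f x\<bar> \<le> C"
  shows "\<bar>integral\<^sup>L m f\<bar> \<le> C"
proof -
  interpret prob_space m by (rule Pm_prob[OF m])
  have "\<bar>integral\<^sup>L m f\<bar> \<le> integral\<^sup>L m (\<lambda>x. C)"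
    by (rule integral_abs_bound_integral) (use int_bdd[OF m f C] C in auto)
  also have "\<dots> = C" by (simp add: prob_space)
  finally show ?thesis .
qed

lemma exists_below_mean:
  fixes f :: "'a::euclidean_space \<Rightarrow> real"
  assumes m: "m \<in> Pm" and f: "f \<in> borel_measurable borel" and C: "\<And>x. \<bar>f x\<bar> \<le> C"
  shows "\<exists>z. f z \<le> integral\<^sup>L m f"
proof (rule ccontr)
  interpret prob_space m by (rule Pm_prob[OF m])
  assume "\<not> ?thesis"
  then have gt: "\<And>z. f z > integral\<^sup>L m f" by (simp add: not_le)
  define I where "I = integral\<^sup>L m f"
  have fi: "integrable m f" by (rule int_bdd[OF m f C])
  have "integral\<^sup>L m (\<lambda>x. f x - I) = I - I"
    using fi by (simp add: prob_space I_def)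
  then have z: "integral\<^sup>L m (\<lambda>x. f x - I) = 0" by simp
  have ae: "AE x in m. f x - I = 0"
    using z fi gt unfolding I_def
    by (subst integral_nonneg_eq_0_iff_AE[symmetric]) (auto intro!: AE_I2 less_imp_le)
  have "AE x in m. False"
  proof (rule AE_mp[OF ae], rule AE_I2)
    fix x show "f x - I = 0 \<longrightarrow> False" using gt[of x] unfolding I_def by simp
  qed
  then show False by simp
qed


lemma has_int_const01: "((\<lambda>x. c::real) has_integral c) {0..1::real}"
  using has_integral_const_real[of c 0 1] by simp

lemma abs_le_has_int:
  fixes h :: "real \<Rightarrow> real"
  assumes h: "(h has_integral I) {0..1::real}" and b: "\<And>t. t \<in> {0..1} \<Longrightarrow> \<bar>h t\<bar> \<le> B"
  shows "\<bar>I\<bar> \<le> B"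
proof -
  have "I \<le> B" by (rule has_integral_le[OF h has_int_const01]) (use b in \<open>auto simp: abs_le_iff\<close>)
  moreover have "-B \<le> I"
  proof (rule has_integral_le[OF has_int_const01 h])
    fix x assume "x \<in> {0..1::real}" then show "-B \<le> h x" using b[of x] by linarith
  qed
  ultimately show ?thesis by simp
qed

lemma lfd_int:
  assumes "is_lfd G D" "m \<in> Pm" "m' \<in> Pm"
  shows "((\<lambda>l. integral\<^sup>L m' (D (mix l m m')) - integral\<^sup>L m (D (mix l m m'))) has_integral (G m' - G m)) {0..1}"
  using assms unfolding is_lfd_def by blast

lemma second_bound:
  fixes dF :: "'a::euclidean_space measure \<Rightarrow> 'a \<Rightarrow> real" and d2F :: "'a measure \<Rightarrow> 'a \<Rightarrow> 'a \<Rightarrow> real"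
  assumes d2F: "\<forall>x. is_lfd (\<lambda>m. dF m x) (\<lambda>m y. d2F m x y)"
    and B2: "\<forall>\<nu>\<in>P2. \<forall>x y. \<bar>d2F \<nu> x y\<bar> \<le> L"
    and r: "\<rho> \<in> P2" "\<rho>' \<in> P2" and ms: "ms \<in> P2" and K: "K > (0::real)"
    and DIFF: "\<And>f C. f \<in> borel_measurable borel \<Longrightarrow> (\<And>x. \<bar>f x\<bar> \<le> C) \<Longrightarrow>
        integral\<^sup>L \<rho>' f - integral\<^sup>L \<rho> f = (f z - integral\<^sup>L ms f) / K"
    and s: "0 \<le> s" "s \<le> 1"
  shows "\<bar>dF (mix s \<rho> \<rho>') w - dF \<rho> w\<bar> \<le> 2 * L * s / K"
proof -
  define \<nu> where "\<nu> = mix s \<rho> \<rho>'"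
  have \<nu>: "\<nu> \<in> P2" unfolding \<nu>_def by (rule mix_P2[OF r s])
  have lw: "is_lfd (\<lambda>m. dF m w) (\<lambda>m y. d2F m w y)" using d2F by blast
  have HI: "((\<lambda>t. integral\<^sup>L \<nu> (\<lambda>y. d2F (mix t \<rho> \<nu>) w y) - integral\<^sup>L \<rho> (\<lambda>y. d2F (mix t \<rho> \<nu>) w y))
      has_integral (dF \<nu> w - dF \<rho> w)) {0..1}"
    using lfd_int[OF lw P2_Pm[OF r(1)] P2_Pm[OF \<nu>]] by simp
  have "\<bar>dF \<nu> w - dF \<rho> w\<bar> \<le> 2 * L * s / K"
  proof (rule abs_le_has_int[OF HI])
    fix t :: real assume t: "t \<in> {0..1}"
    define g where "g = (\<lambda>y. d2F (mix t \<rho> \<nu>) w y)"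
    have lam: "mix t \<rho> \<nu> \<in> P2" using t by (intro mix_P2[OF r(1) \<nu>]) auto
    have gm: "g \<in> borel_measurable borel" unfolding g_def
      using lfd_meas[OF lw P2_Pm[OF lam]] by simp
    have gb: "\<And>y. \<bar>g y\<bar> \<le> L" unfolding g_def using B2 lam by blast
    have gi: "integrable \<rho> g" "integrable \<rho>' g"
      using int_bdd[OF P2_Pm[OF r(1)] gm gb] int_bdd[OF P2_Pm[OF r(2)] gm gb] by auto
    have "integral\<^sup>L \<nu> g = (1 - s) * integral\<^sup>L \<rho> g + s * integral\<^sup>L \<rho>' g"
      unfolding \<nu>_def by (rule integral_mix[OF P2_Pm[OF r(1)] P2_Pm[OF r(2)] s gm gi])
    then have "integral\<^sup>L \<nu> g - integral\<^sup>L \<rho> g = s * (integral\<^sup>L \<rho>' g - integral\<^sup>L \<rho> g)"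
      by (simp add: algebra_simps)
    also have "\<dots> = s * ((g z - integral\<^sup>L ms g) / K)" using DIFF[OF gm gb] by simp
    finally have eq: "integral\<^sup>L \<nu> g - integral\<^sup>L \<rho> g = s * (g z - integral\<^sup>L ms g) / K" by simp
    have "\<bar>g z - integral\<^sup>L ms g\<bar> \<le> 2 * L"
      using gb[of z] int_abs_le[OF P2_Pm[OF ms] gm gb] by linarith
    then have "\<bar>s * (g z - integral\<^sup>L ms g)\<bar> \<le> s * (2 * L)"
      using s by (simp add: abs_mult mult_left_mono)
    then have "\<bar>s * (g z - integral\<^sup>L ms g) / K\<bar> \<le> 2 * L * s / K"
      using K by (simp add: divide_right_mono mult.commute mult.left_commute)
    then show "\<bar>integral\<^sup>L \<nu> (\<lambda>y. d2F (mix t \<rho> \<nu>) w y) - integral\<^sup>L \<rho> (\<lambda>y. d2F (mix t \<rho> \<nu>) w y)\<bar> \<le> 2 * L * s / K"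
      using eq unfolding g_def by simp
  qed
  then show ?thesis unfolding \<nu>_def .
qed


lemma lin_has_int: "((\<lambda>s. a + b * s) has_integral (a + b / 2)) {0..1::real}"
proof -
  have "((\<lambda>x::real. x) has_integral (1\<^sup>2 - 0\<^sup>2) / 2) {0..1}" by (rule ident_has_integral) simp
  then have "((\<lambda>x::real. b * x) has_integral b * ((1\<^sup>2 - 0\<^sup>2) / 2)) {0..1}" by (rule has_integral_mult_right)
  from has_integral_add[OF has_int_const01[of a] this] show ?thesis by simp
qed

lemma first_bound:
  fixes dF :: "'a::euclidean_space measure \<Rightarrow> 'a \<Rightarrow> real" and d2F :: "'a measure \<Rightarrow> 'a \<Rightarrow> 'a \<Rightarrow> real"
  assumes dF: "is_lfd F dF"
    and d2F: "\<forall>x. is_lfd (\<lambda>m. dF m x) (\<lambda>m y. d2F m x y)"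
    and B1: "\<forall>\<nu>\<in>P2. \<forall>x. \<bar>dF \<nu> x\<bar> \<le> L"
    and B2: "\<forall>\<nu>\<in>P2. \<forall>x y. \<bar>d2F \<nu> x y\<bar> \<le> L"
    and r: "\<rho> \<in> P2" "\<rho>' \<in> P2" and ms: "ms \<in> P2" and K: "K > (0::real)"
    and DIFF: "\<And>f C. f \<in> borel_measurable borel \<Longrightarrow> (\<And>x. \<bar>f x\<bar> \<le> C) \<Longrightarrow>
        integral\<^sup>L \<rho>' f - integral\<^sup>L \<rho> f = (f z - integral\<^sup>L ms f) / K"
  shows "F \<rho>' - F \<rho> \<le> (dF \<rho> z - integral\<^sup>L ms (dF \<rho>)) / K + 2 * L / K^2"
proof -
  define a where "a = (dF \<rho> z - integral\<^sup>L ms (dF \<rho>)) / K"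
  define b where "b = 4 * L / K^2"
  have HI: "((\<lambda>s. integral\<^sup>L \<rho>' (dF (mix s \<rho> \<rho>')) - integral\<^sup>L \<rho> (dF (mix s \<rho> \<rho>'))) has_integral (F \<rho>' - F \<rho>)) {0..1}"
    by (rule lfd_int[OF dF P2_Pm[OF r(1)] P2_Pm[OF r(2)]])
  have g0m: "dF \<rho> \<in> borel_measurable borel" by (rule lfd_meas[OF dF P2_Pm[OF r(1)]])
  have g0b: "\<And>y. \<bar>dF \<rho> y\<bar> \<le> L" using B1 r(1) by blast
  have "F \<rho>' - F \<rho> \<le> a + b / 2"
  proof (rule has_integral_le[OF HI lin_has_int])
    fix s :: real assume s: "s \<in> {0..1}"
    then have s0: "0 \<le> s" "s \<le> 1" by auto
    define f where "f = dF (mix s \<rho> \<rho>')"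
    have nu: "mix s \<rho> \<rho>' \<in> P2" by (rule mix_P2[OF r s0])
    have fm: "f \<in> borel_measurable borel" unfolding f_def by (rule lfd_meas[OF dF P2_Pm[OF nu]])
    have fb: "\<And>y. \<bar>f y\<bar> \<le> L" unfolding f_def using B1 nu by blast
    have sb: "\<And>y. \<bar>f y - dF \<rho> y\<bar> \<le> 2 * L * s / K"
      unfolding f_def by (rule second_bound[OF d2F B2 r ms K DIFF s0])
    have eq: "integral\<^sup>L \<rho>' f - integral\<^sup>L \<rho> f = (f z - integral\<^sup>L ms f) / K" by (rule DIFF[OF fm fb])
    have dm: "(\<lambda>y. f y - dF \<rho> y) \<in> borel_measurable borel" using fm g0m by measurable
    have "\<bar>integral\<^sup>L ms (\<lambda>y. f y - dF \<rho> y)\<bar> \<le> 2 * L * s / K"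
      by (rule int_abs_le[OF P2_Pm[OF ms] dm sb])
    moreover have "integral\<^sup>L ms (\<lambda>y. f y - dF \<rho> y) = integral\<^sup>L ms f - integral\<^sup>L ms (dF \<rho>)"
      using Bochner_Integration.integral_diff[OF int_bdd[OF P2_Pm[OF ms] fm fb] int_bdd[OF P2_Pm[OF ms] g0m g0b]] by simp
    ultimately have i1: "integral\<^sup>L ms (dF \<rho>) - 2 * L * s / K \<le> integral\<^sup>L ms f" by simp
    have i2: "f z \<le> dF \<rho> z + 2 * L * s / K" using sb[of z] by simp
    have "f z - integral\<^sup>L ms f \<le> (dF \<rho> z - integral\<^sup>L ms (dF \<rho>)) + 4 * L * s / K"
      using i1 i2 by simp
    then have "(f z - integral\<^sup>L ms f) / K \<le> ((dF \<rho> z - integral\<^sup>L ms (dF \<rho>)) + 4 * L * s / K) / K"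
      using K by (rule divide_right_mono[OF _ less_imp_le])
    also have "\<dots> = a + b * s" unfolding a_def b_def using K by (simp add: field_simps power2_eq_square)
    finally show "integral\<^sup>L \<rho>' (dF (mix s \<rho> \<rho>')) - integral\<^sup>L \<rho> (dF (mix s \<rho> \<rho>')) \<le> a + b * s"
      using eq unfolding f_def by simp
  qed
  then show ?thesis unfolding a_def b_def by simp
qed



lemma nn_return_lower:
  fixes g :: "'b::euclidean_space \<Rightarrow> ennreal"
  shows "g p \<le> (\<integral>\<^sup>+ z. g z \<partial>return borel p)"
proof -
  have "(\<integral>\<^sup>+ z. g p * indicator {p} z \<partial>return borel p) = g p * emeasure (return borel p) {p}"
    by (rule nn_integral_cmult_indicator) simp
  also have "\<dots> = g p" by simp
  finally have e: "(\<integral>\<^sup>+ z. g p * indicator {p} z \<partial>return borel p) = g p" .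
  have "(\<integral>\<^sup>+ z. g p * indicator {p} z \<partial>return borel p) \<le> (\<integral>\<^sup>+ z. g z \<partial>return borel p)"
    by (rule nn_integral_mono) (simp add: indicator_def)
  then show ?thesis using e by simp
qed

lemma pointwise_bounds:
  fixes dF :: "'a::euclidean_space measure \<Rightarrow> 'a \<Rightarrow> real" and d2F :: "'a measure \<Rightarrow> 'a \<Rightarrow> 'a \<Rightarrow> real"
  assumes bound: "\<forall>\<mu> :: ('a \<times> 'a) measure.
        prob_space \<mu> \<and> sets \<mu> = sets borel
        \<and> integrable \<mu> (\<lambda>z. norm (fst z) ^ 2) \<and> integrable \<mu> (\<lambda>z. norm (snd z) ^ 2)
        \<longrightarrow> (\<integral>\<^sup>+ z. (SUP \<nu>\<in>P2. ennreal \<bar>dF \<nu> (fst z)\<bar>) \<partial>\<mu>)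
          + (\<integral>\<^sup>+ z. (SUP \<nu>\<in>P2. ennreal \<bar>d2F \<nu> (fst z) (snd z)\<bar>) \<partial>\<mu>) \<le> ennreal L"
    and Lpos: "L > 0" and nu: "\<nu> \<in> P2" "\<nu>' \<in> P2"
  shows "\<bar>dF \<nu> x\<bar> + \<bar>d2F \<nu>' x y\<bar> \<le> L"
proof -
  define p where "p = (x, y)"
  have m1: "(\<lambda>z::'a\<times>'a. norm (fst z) ^ 2) \<in> borel_measurable borel" by (intro borel_measurable_continuous_onI continuous_intros)
  have m2: "(\<lambda>z::'a\<times>'a. norm (snd z) ^ 2) \<in> borel_measurable borel" by (intro borel_measurable_continuous_onI continuous_intros)
  have "prob_space (return borel p)" by (rule prob_space_return) simp
  moreover have "sets (return borel p) = sets borel" by simp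
  ultimately have B: "(\<integral>\<^sup>+ z. (SUP \<nu>\<in>P2. ennreal \<bar>dF \<nu> (fst z)\<bar>) \<partial>return borel p)
          + (\<integral>\<^sup>+ z. (SUP \<nu>\<in>P2. ennreal \<bar>d2F \<nu> (fst z) (snd z)\<bar>) \<partial>return borel p) \<le> ennreal L"
    using bound integrable_return_b[OF m1] integrable_return_b[OF m2] by blast
  have a: "ennreal \<bar>dF \<nu> x\<bar> \<le> (\<integral>\<^sup>+ z. (SUP \<nu>\<in>P2. ennreal \<bar>dF \<nu> (fst z)\<bar>) \<partial>return borel p)"
  proof -
    have "ennreal \<bar>dF \<nu> x\<bar> \<le> (SUP \<nu>\<in>P2. ennreal \<bar>dF \<nu> (fst p)\<bar>)"
      using nu(1) unfolding p_def by (auto intro: SUP_upper)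
    also have "\<dots> \<le> (\<integral>\<^sup>+ z. (SUP \<nu>\<in>P2. ennreal \<bar>dF \<nu> (fst z)\<bar>) \<partial>return borel p)"
      by (rule nn_return_lower)
    finally show ?thesis .
  qed
  have b: "ennreal \<bar>d2F \<nu>' x y\<bar> \<le> (\<integral>\<^sup>+ z. (SUP \<nu>\<in>P2. ennreal \<bar>d2F \<nu> (fst z) (snd z)\<bar>) \<partial>return borel p)"
  proof -
    have "ennreal \<bar>d2F \<nu>' x y\<bar> \<le> (SUP \<nu>\<in>P2. ennreal \<bar>d2F \<nu> (fst p) (snd p)\<bar>)"
      using nu(2) unfolding p_def by (auto intro: SUP_upper)
    also have "\<dots> \<le> (\<integral>\<^sup>+ z. (SUP \<nu>\<in>P2. ennreal \<bar>d2F \<nu> (fst z) (snd z)\<bar>) \<partial>return borel p)"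
      by (rule nn_return_lower)
    finally show ?thesis .
  qed
  have "ennreal \<bar>dF \<nu> x\<bar> + ennreal \<bar>d2F \<nu>' x y\<bar> \<le> ennreal L"
    using add_mono[OF a b] B by (rule order_trans)
  moreover have "ennreal (\<bar>dF \<nu> x\<bar> + \<bar>d2F \<nu>' x y\<bar>) = ennreal \<bar>dF \<nu> x\<bar> + ennreal \<bar>d2F \<nu>' x y\<bar>"
    by (rule ennreal_plus) simp_all
  ultimately have le: "ennreal (\<bar>dF \<nu> x\<bar> + \<bar>d2F \<nu>' x y\<bar>) \<le> ennreal L" by (simp only:)
  show ?thesis using ennreal_le_iff[OF less_imp_le[OF Lpos]] le by blast
qed

lemma sucmul: "real (Suc k) * c = real k * c + c" by (simp add: algebra_simps)

lemma mulcancel: "(n::real) \<noteq> 0 \<Longrightarrow> n * (a / n + b / n * c) = a + b * c"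
  by (simp add: field_simps)

theorem theorem2p2:
  fixes F :: "'a::euclidean_space measure \<Rightarrow> real"
    and dF :: "'a measure \<Rightarrow> 'a \<Rightarrow> real"
    and d2F :: "'a measure \<Rightarrow> 'a \<Rightarrow> 'a \<Rightarrow> real"
    and L :: real and mstar :: "'a measure" and N :: nat
  assumes C1: "C1 F"
    and dF: "is_lfd F dF"
    and d2F: "\<forall>x. is_lfd (\<lambda>m. dF m x) (\<lambda>m y. d2F m x y)"
    and d2F_cont: "jcont2 d2F"
    and Lpos: "L > 0"
    and bound: "\<forall>\<mu> :: ('a \<times> 'a) measure.
        prob_space \<mu> \<and> sets \<mu> = sets borel
        \<and> integrable \<mu> (\<lambda>z. norm (fst z) ^ 2) \<and> integrable \<mu> (\<lambda>z. norm (snd z) ^ 2)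
        \<longrightarrow> (\<integral>\<^sup>+ z. (SUP \<nu>\<in>P2. ennreal \<bar>dF \<nu> (fst z)\<bar>) \<partial>\<mu>)
          + (\<integral>\<^sup>+ z. (SUP \<nu>\<in>P2. ennreal \<bar>d2F \<nu> (fst z) (snd z)\<bar>) \<partial>\<mu>) \<le> ennreal L"
    and mstar: "mstar \<in> P2"
    and minimiser: "\<forall>m\<in>P2. F mstar \<le> F m"
    and N: "N \<ge> 1"
  shows "\<bar>(INF x :: nat \<Rightarrow> 'a. F (empirical N x)) - F mstar\<bar> \<le> 2 * L / real N"
proof -
  have B1: "\<forall>\<nu>\<in>P2. \<forall>x. \<bar>dF \<nu> x\<bar> \<le> L"
  proof (intro ballI allI)
    fix \<nu> :: "'a measure" and x :: 'a assume "\<nu> \<in> P2"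
    from pointwise_bounds[OF bound Lpos this this, of x x] show "\<bar>dF \<nu> x\<bar> \<le> L" by simp
  qed
  have B2: "\<forall>\<nu>\<in>P2. \<forall>x y. \<bar>d2F \<nu> x y\<bar> \<le> L"
  proof (intro ballI allI)
    fix \<nu> :: "'a measure" and x y :: 'a assume "\<nu> \<in> P2"
    from pointwise_bounds[OF bound Lpos this this, of x y] show "\<bar>d2F \<nu> x y\<bar> \<le> L" by simp
  qed
  have K: "real N > 0" using N by simp
  have ms_Pm: "mstar \<in> Pm" by (rule P2_Pm[OF mstar])
  have main: "k \<le> N \<Longrightarrow> \<exists>x. F (rho N mstar k x) \<le> F mstar + real k * (2 * L / (real N)^2)" for k
  proof (induction k)
    case 0
    show ?case using rho_0[OF ms_Pm N] by simp
  next
    case (Suc k)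
    then have kN: "k \<le> N" "Suc k \<le> N" by auto
    obtain x where x: "F (rho N mstar k x) \<le> F mstar + real k * (2 * L / (real N)^2)"
      using Suc.IH kN(1) by blast
    define \<rho> where "\<rho> = rho N mstar k x"
    have r: "\<rho> \<in> P2" unfolding \<rho>_def by (rule rho_P2[OF mstar kN(1) N])
    have gm: "dF \<rho> \<in> borel_measurable borel" by (rule lfd_meas[OF dF P2_Pm[OF r]])
    have gb: "\<And>y. \<bar>dF \<rho> y\<bar> \<le> L" using B1 r by blast
    obtain z where z: "dF \<rho> z \<le> integral\<^sup>L mstar (dF \<rho>)"
      using exists_below_mean[OF ms_Pm gm gb] by blast
    define x' where "x' = x(k := z)"
    define \<rho>' where "\<rho>' = rho N mstar (Suc k) x'"
    have r': "\<rho>' \<in> P2" unfolding \<rho>'_def by (rule rho_P2[OF mstar kN(2) N])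
    have req: "\<rho> = rho N mstar k x'" unfolding \<rho>_def x'_def by (simp add: rho_upd)
    have DIFF: "integral\<^sup>L \<rho>' f - integral\<^sup>L \<rho> f = (f z - integral\<^sup>L mstar f) / real N"
      if fm: "f \<in> borel_measurable borel" and fb: "\<And>x. \<bar>f x\<bar> \<le> C" for f :: "'a \<Rightarrow> real" and C
    proof -
      have fi: "integrable mstar f" by (rule int_bdd[OF ms_Pm fm fb])
      have s1: "(\<Sum>j<Suc k. f (x' j)) = (\<Sum>j<k. f (x j)) + f z"
        unfolding x'_def by (simp add: sum.lessThan_Suc)
      have s2: "(\<Sum>j<k. f (x' j)) = (\<Sum>j<k. f (x j))"
        unfolding x'_def by (intro sum.cong) auto
      define S where "S = (\<Sum>j<k. f (x j))"
      define I where "I = integral\<^sup>L mstar f"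
      have "integral\<^sup>L \<rho>' f = (\<Sum>j<Suc k. f (x' j)) / real N + (real N - real (Suc k)) / real N * integral\<^sup>L mstar f"
        unfolding \<rho>'_def by (rule integral_rho[OF ms_Pm kN(2) fm fi])
      then have "real N * integral\<^sup>L \<rho>' f = real N * ((\<Sum>j<Suc k. f (x' j)) / real N + (real N - real (Suc k)) / real N * integral\<^sup>L mstar f)"
        by simp
      also have "\<dots> = (\<Sum>j<Suc k. f (x' j)) + (real N - real (Suc k)) * integral\<^sup>L mstar f"
        using K by (intro mulcancel) simp
      finally have e1: "real N * integral\<^sup>L \<rho>' f = S + f z + (real N - real (Suc k)) * I"
        unfolding s1 S_def I_def .
      have "integral\<^sup>L \<rho> f = (\<Sum>j<k. f (x' j)) / real N + (real N - real k) / real N * integral\<^sup>L mstar f"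
        unfolding req by (rule integral_rho[OF ms_Pm kN(1) fm fi])
      then have "real N * integral\<^sup>L \<rho> f = real N * ((\<Sum>j<k. f (x' j)) / real N + (real N - real k) / real N * integral\<^sup>L mstar f)"
        by simp
      also have "\<dots> = (\<Sum>j<k. f (x' j)) + (real N - real k) * integral\<^sup>L mstar f"
        using K by (intro mulcancel) simp
      finally have e2: "real N * integral\<^sup>L \<rho> f = S + (real N - real k) * I"
        unfolding s2 S_def I_def .
      have "real N * (integral\<^sup>L \<rho>' f - integral\<^sup>L \<rho> f) = f z - I"
        using e1 e2 by (simp add: algebra_simps)
      then show ?thesis unfolding I_def using K by (simp add: field_simps)
    qed
    have "F \<rho>' - F \<rho> \<le> (dF \<rho> z - integral\<^sup>L mstar (dF \<rho>)) / real N + 2 * L / (real N)^2"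
      by (rule first_bound[OF dF d2F B1 B2 r r' mstar K DIFF])
    moreover have "(dF \<rho> z - integral\<^sup>L mstar (dF \<rho>)) / real N \<le> 0"
      using z K by (simp add: divide_nonpos_pos)
    ultimately have "F \<rho>' \<le> F \<rho> + 2 * L / (real N)^2" by linarith
    then have "F \<rho>' \<le> F mstar + real (Suc k) * (2 * L / (real N)^2)"
    proof -
      have "real (Suc k) * (2 * L / (real N)^2) = real k * (2 * L / (real N)^2) + 2 * L / (real N)^2"
        by (rule sucmul)
      then show ?thesis using x \<open>F \<rho>' \<le> F \<rho> + 2 * L / (real N)^2\<close> unfolding \<rho>_def by linarith
    qed
    then show ?case unfolding \<rho>'_def by blast
  qed
  obtain x0 where x0: "F (rho N mstar N x0) \<le> F mstar + real N * (2 * L / (real N)^2)"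
    using main[of N] by blast
  have "real N * (2 * L / (real N)^2) = 2 * L / real N" using K by (simp add: power2_eq_square)
  then have x0': "F (empirical N x0) \<le> F mstar + 2 * L / real N"
    using x0 rho_N[OF ms_Pm N] by simp
  have lb: "\<And>x. F mstar \<le> F (empirical N x)"
  proof -
    fix x :: "nat \<Rightarrow> 'a"
    have "empirical N x \<in> P2" using rho_P2[OF mstar order_refl N, of x] rho_N[OF ms_Pm N] by simp
    then show "F mstar \<le> F (empirical N x)" using minimiser by blast
  qed
  have bdd: "bdd_below (range (\<lambda>x. F (empirical N x)))"
    using lb by (intro bdd_belowI) auto
  have i1: "F mstar \<le> (INF x :: nat \<Rightarrow> 'a. F (empirical N x))"
    by (rule cINF_greatest) (use lb in auto)
  have i2: "(INF x :: nat \<Rightarrow> 'a. F (empirical N x)) \<le> F (empirical N x0)"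
    by (rule cINF_lower[OF bdd]) simp
  show ?thesis using i1 i2 x0' by simp
qed


end
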